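(* Let $\mathcal{H}$ be a complex Hilbert space, let $T, S\in\mathbb{B}(\mathcal{H})$, and let $N(\cdot)$ be a self-adjoint algebra norm on $\mathbb{B}(\mathcal{H})$. Then, for each choice of sign $\pm$, $$w_{N}(TS) \leq \min\Big\{N(T)w_{N}(S) + \tfrac{1}{2} w_{N}(TS \pm ST^* ),\ N(S)w_{N}(T) + \tfrac{1}{2} w_{N}(TS \pm S^*T)\Big\} \leq 2\min\Big\{N(T)w_{N}(S),\ N(S)w_{N}(T)\Big\} \leq 4w_{N}(T)w_{N}(S).$$
   Context: $\mathbb{B}(\mathcal{H})$ is the algebra of bounded linear operators on $\mathcal{H}$. A norm $N(\cdot)$ on $\mathbb{B}(\mathcal{H})$ is an algebra norm if $N(TS)\le N(T)N(S)$ for all $T,S$, and self-adjoint if $N(T^* )=N(T)$ for all $T$. For $A\in\mathbb{B}(\mathcal{H})$, ${\rm Re}(A)=\frac{A+A^*}{2}$. The generalized numerical radius is $w_N(T)=\sup_{\theta\in\mathbb{R}} N\big({\rm Re}(e^{i\theta}T)\big)$. *)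

theory Defs
  imports "HOL-Analysis.Analysis"
begin

class complex_inner = real_normed_vector +
  fixes scaleC :: "complex \<Rightarrow> 'a \<Rightarrow> 'a"
    and cinner :: "'a \<Rightarrow> 'a \<Rightarrow> complex"
  assumes scaleC_add_right: "scaleC a (x + y) = scaleC a x + scaleC a y"
    and scaleC_add_left: "scaleC (a + b) x = scaleC a x + scaleC b x"
    and scaleC_scaleC: "scaleC a (scaleC b x) = scaleC (a * b) x"
    and scaleC_one: "scaleC 1 x = x"
    and scaleR_scaleC: "scaleR r x = scaleC (complex_of_real r) x"
    and cinner_commute: "cinner x y = cnj (cinner y x)"
    and cinner_add_left: "cinner (x + y) z = cinner x z + cinner y z"
    and cinner_scaleC_left: "cinner (scaleC c x) y = cnj c * cinner x y"
    and cinner_nonneg: "0 \<le> Re (cinner x x)"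
    and cinner_eq_zero_iff: "cinner x x = 0 \<longleftrightarrow> x = 0"
    and norm_eq_sqrt_cinner: "norm x = sqrt (Re (cinner x x))"

class chilbert_space = complex_inner + complete_space

definition bounded_op :: "('a::complex_inner \<Rightarrow> 'a) \<Rightarrow> bool" where
  "bounded_op A \<longleftrightarrow>
     (\<forall>x y. A (x + y) = A x + A y) \<and> (\<forall>c x. A (scaleC c x) = scaleC c (A x)) \<and>
     (\<exists>K. \<forall>x. norm (A x) \<le> norm x * K)"

definition op_adj :: "('a::complex_inner \<Rightarrow> 'a) \<Rightarrow> ('a \<Rightarrow> 'a)" where
  "op_adj A = (SOME B. \<forall>x y. cinner (A x) y = cinner x (B y))"

definition op_add :: "('a::complex_inner \<Rightarrow> 'a) \<Rightarrow> ('a \<Rightarrow> 'a) \<Rightarrow> ('a \<Rightarrow> 'a)" where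
  "op_add A B = (\<lambda>x. A x + B x)"

definition op_scale :: "complex \<Rightarrow> ('a::complex_inner \<Rightarrow> 'a) \<Rightarrow> ('a \<Rightarrow> 'a)" where
  "op_scale c A = (\<lambda>x. scaleC c (A x))"

definition op_Re :: "('a::complex_inner \<Rightarrow> 'a) \<Rightarrow> ('a \<Rightarrow> 'a)" where
  "op_Re A = op_scale (1/2) (op_add A (op_adj A))"

definition is_op_norm :: "(('a::complex_inner \<Rightarrow> 'a) \<Rightarrow> real) \<Rightarrow> bool" where
  "is_op_norm N \<longleftrightarrow>
     (\<forall>A. bounded_op A \<longrightarrow> 0 \<le> N A) \<and>
     (\<forall>A. bounded_op A \<longrightarrow> (N A = 0 \<longleftrightarrow> A = (\<lambda>x. 0))) \<and>
     (\<forall>A B. bounded_op A \<and> bounded_op B \<longrightarrow> N (op_add A B) \<le> N A + N B) \<and>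
     (\<forall>c A. bounded_op A \<longrightarrow> N (op_scale c A) = cmod c * N A)"

definition is_algebra_norm :: "(('a::complex_inner \<Rightarrow> 'a) \<Rightarrow> real) \<Rightarrow> bool" where
  "is_algebra_norm N \<longleftrightarrow> is_op_norm N \<and>
     (\<forall>A B. bounded_op A \<and> bounded_op B \<longrightarrow> N (A \<circ> B) \<le> N A * N B)"

definition is_selfadjoint_norm :: "(('a::complex_inner \<Rightarrow> 'a) \<Rightarrow> real) \<Rightarrow> bool" where
  "is_selfadjoint_norm N \<longleftrightarrow> (\<forall>A. bounded_op A \<longrightarrow> N (op_adj A) = N A)"

definition w_N :: "(('a::complex_inner \<Rightarrow> 'a) \<Rightarrow> real) \<Rightarrow> ('a \<Rightarrow> 'a) \<Rightarrow> real" where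
  "w_N N T = (SUP \<theta>::real. N (op_Re (op_scale (exp (\<i> * complex_of_real \<theta>)) T)))"

end

theory Submission
  imports Defs
begin


context complex_inner begin

lemma scaleC_zero_left [simp]: "scaleC 0 x = 0"
proof -
  have "scaleC 0 x = scaleC 0 x + scaleC 0 x" using scaleC_add_left[of 0 0 x] by simp
  then show ?thesis by simp
qed

lemma scaleC_zero_right [simp]: "scaleC c 0 = 0"
proof -
  have "scaleC c 0 = scaleC c 0 + scaleC c 0" using scaleC_add_right[of c 0 0] by simp
  then show ?thesis by simp
qed

lemma scaleC_minus_left: "scaleC (- c) x = - scaleC c x"
proof -
  have "scaleC (- c) x + scaleC c x = scaleC (- c + c) x" by (rule scaleC_add_left[symmetric])
  then have "scaleC (- c) x + scaleC c x = 0" by simp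
  then show ?thesis by (simp add: eq_neg_iff_add_eq_0)
qed

lemma scaleC_minus_right: "scaleC c (- x) = - scaleC c x"
proof -
  have "scaleC c (- x) + scaleC c x = scaleC c (- x + x)" by (rule scaleC_add_right[symmetric])
  then have "scaleC c (- x) + scaleC c x = 0" by simp
  then show ?thesis by (simp add: eq_neg_iff_add_eq_0)
qed

lemma scaleC_minus_one: "scaleC (-1) x = - x"
  by (simp only: scaleC_minus_left scaleC_one)

lemma scaleC_diff_right: "scaleC c (x - y) = scaleC c x - scaleC c y"
proof -
  have "scaleC c (x - y) = scaleC c (x + - y)" by simp
  also have "\<dots> = scaleC c x - scaleC c y" by (simp only: scaleC_add_right scaleC_minus_right) simp
  finally show ?thesis .
qed

lemma scaleC_of_real: "scaleC (complex_of_real r) x = scaleR r x"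
  by (simp only: scaleR_scaleC)

lemma cinner_add_right: "cinner x (y + z) = cinner x y + cinner x z"
proof -
  have "cinner x (y + z) = cnj (cinner (y + z) x)" by (rule cinner_commute)
  also have "\<dots> = cnj (cinner y x) + cnj (cinner z x)" by (simp only: cinner_add_left complex_cnj_add)
  also have "\<dots> = cinner x y + cinner x z" by (simp only: cinner_commute[of x y] cinner_commute[of x z])
  finally show ?thesis .
qed

lemma cinner_scaleC_right: "cinner x (scaleC c y) = c * cinner x y"
proof -
  have "cinner x (scaleC c y) = cnj (cinner (scaleC c y) x)" by (rule cinner_commute)
  also have "\<dots> = c * cnj (cinner y x)" by (simp only: cinner_scaleC_left complex_cnj_mult complex_cnj_cnj)
  also have "\<dots> = c * cinner x y" by (simp only: cinner_commute[of x y])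
  finally show ?thesis .
qed

lemma cinner_zero_left [simp]: "cinner 0 y = 0"
  using cinner_scaleC_left[of 0 0 y] by simp

lemma cinner_zero_right [simp]: "cinner x 0 = 0"
  using cinner_commute[of x 0] by simp

lemma cinner_minus_left: "cinner (- x) y = - cinner x y"
  using cinner_scaleC_left[of "-1" x y] by (simp add: scaleC_minus_one)

lemma cinner_minus_right: "cinner x (- y) = - cinner x y"
  using cinner_scaleC_right[of x "-1" y] by (simp add: scaleC_minus_one)

lemma cinner_diff_left: "cinner (x - y) z = cinner x z - cinner y z"
proof -
  have "cinner (x - y) z = cinner (x + - y) z" by simp
  also have "\<dots> = cinner x z - cinner y z" by (simp only: cinner_add_left cinner_minus_left) simp
  finally show ?thesis .
qed

lemma cinner_diff_right: "cinner x (y - z) = cinner x y - cinner x z"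
proof -
  have "cinner x (y - z) = cinner x (y + - z)" by simp
  also have "\<dots> = cinner x y - cinner x z" by (simp only: cinner_add_right cinner_minus_right) simp
  finally show ?thesis .
qed

lemma cinner_self: "cinner x x = complex_of_real ((norm x)^2)"
proof -
  have h: "Im (cinner x x) = Im (cnj (cinner x x))" using cinner_commute[of x x] by (rule arg_cong)
  have "Im (cinner x x) = 0" using h by simp
  moreover have "Re (cinner x x) = (norm x)^2" using norm_eq_sqrt_cinner[of x] cinner_nonneg[of x] by simp
  ultimately show ?thesis by (simp add: complex_eq_iff)
qed

lemma cnj_mult_self: "cnj t * t = complex_of_real ((cmod t)^2)"
proof -
  have "cnj t * t = t * cnj t" by (rule mult.commute)
  also have "\<dots> = complex_of_real ((Re t)^2 + (Im t)^2)" by (rule complex_mult_cnj)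
  also have "(Re t)^2 + (Im t)^2 = (cmod t)^2" by (simp add: cmod_power2)
  finally show ?thesis .
qed

lemma Re_ofreal_mult: "Re (complex_of_real r * z) = r * Re z"
  by simp

lemma Re_cinner_self: "Re (cinner x x) = (norm x)^2"
  using norm_eq_sqrt_cinner[of x] cinner_nonneg[of x] by simp

lemma Im_cinner_self: "Im (cinner x x) = 0"
  using cinner_self[of x] by simp

lemma norm_scaleC: "norm (scaleC c x) = cmod c * norm x"
proof -
  have cc: "cnj c * c = complex_of_real ((cmod c)^2)"
    by (rule cnj_mult_self)
  have "cinner (scaleC c x) (scaleC c x) = cnj c * c * cinner x x"
    by (simp add: cinner_scaleC_left cinner_scaleC_right mult.assoc)
  then have "cinner (scaleC c x) (scaleC c x) = complex_of_real ((cmod c)^2) * cinner x x"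
    by (simp only: cc)
  then have "Re (cinner (scaleC c x) (scaleC c x)) = Re (complex_of_real ((cmod c)^2) * cinner x x)" by simp
  then have "(norm (scaleC c x))^2 = (cmod c)^2 * (norm x)^2"
    by (simp only: Re_cinner_self Re_ofreal_mult)
  then have "(norm (scaleC c x))^2 = ((cmod c) * norm x)^2"
    by (simp add: power_mult_distrib)
  then show ?thesis by (simp add: power2_eq_iff_nonneg)
qed

lemma norm_diff_scaleC_sq:
  "(norm (u - scaleC t v))^2 = (norm u)^2 - 2 * Re (cnj t * cinner v u) + (cmod t)^2 * (norm v)^2"
proof -
  have e: "cinner (u - scaleC t v) (u - scaleC t v) = cinner u u - t * cnj (cinner v u) - cnj t * cinner v u + cnj t * t * cinner v v"
  proof -
    have g: "a - b - (c - d) = a - b - c + (d :: complex)" for a b c d by simp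
    show ?thesis
      unfolding cinner_diff_left cinner_diff_right cinner_scaleC_left cinner_scaleC_right cinner_commute[of u v] g
      by (simp add: algebra_simps)
  qed
  have tt: "cnj t * t = complex_of_real ((cmod t)^2)"
    by (rule cnj_mult_self)
  have r: "Re (t * cnj p) = Re (cnj t * p)" for p by simp
  have "Re (cinner (u - scaleC t v) (u - scaleC t v)) = Re (cinner u u) - Re (t * cnj (cinner v u)) - Re (cnj t * cinner v u) + Re (complex_of_real ((cmod t)^2) * cinner v v)"
    unfolding e tt by (simp only: plus_complex.sel minus_complex.sel)
  then show ?thesis unfolding Re_cinner_self r Re_ofreal_mult by linarith
qed

lemma cinner_cauchy_schwarz: "cmod (cinner x y) \<le> norm x * norm y"
proof (cases "x = 0")
  case True then show ?thesis by simp
next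
  case False
  then have nx: "norm x > 0" by simp
  define p where "p = cinner x y"
  define t where "t = p / complex_of_real ((norm x)^2)"
  have "0 \<le> (norm (y - scaleC t x))^2" by simp
  also have "\<dots> = (norm y)^2 - 2 * Re (cnj t * p) + (cmod t)^2 * (norm x)^2"
    unfolding norm_diff_scaleC_sq p_def ..
  also have "cnj t * p = complex_of_real ((cmod p)^2 / (norm x)^2)"
    unfolding t_def by (simp add: complex_mult_cnj cmod_power2 mult.commute)
  also have "(cmod t)^2 = (cmod p)^2 / (norm x)^4"
    unfolding t_def by (simp add: norm_divide power_divide norm_power flip: power_mult)
  finally have "0 \<le> (norm y)^2 - (cmod p)^2 / (norm x)^2" using nx
    by (simp add: power2_eq_square power4_eq_xxxx field_simps)
  then have "(cmod p)^2 \<le> (norm x * norm y)^2" using nx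
    by (simp add: field_simps power_mult_distrib)
  then show ?thesis unfolding p_def
    by (meson power2_le_imp_le norm_ge_zero zero_le_mult_iff)
qed

lemma parallelogram: "(norm (a + b))^2 + (norm (a - b))^2 = 2 * (norm a)^2 + 2 * (norm b)^2"
proof -
  have "cinner (a + b) (a + b) + cinner (a - b) (a - b) = 2 * cinner a a + 2 * cinner b b"
    by (simp add: cinner_add_left cinner_add_right cinner_diff_left cinner_diff_right algebra_simps)
  then have "Re (cinner (a + b) (a + b) + cinner (a - b) (a - b)) = Re (2 * cinner a a + 2 * cinner b b)"
    by simp
  then show ?thesis by (simp add: Re_cinner_self Im_cinner_self)
qed

end

lemma riesz:
  fixes f :: "'a::chilbert_space \<Rightarrow> complex"
  assumes add: "\<And>x y. f (x + y) = f x + f y"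
    and sc: "\<And>c x. f (scaleC c x) = c * f x"
    and bd: "\<And>x. cmod (f x) \<le> norm x * K"
  shows "\<exists>y. \<forall>x. f x = cinner y x"
proof (cases "\<forall>x. f x = 0")
  case True
  then show ?thesis by (intro exI[of _ 0]) simp
next
  case False
  then obtain z0 where z0: "f z0 \<noteq> 0" by blast
  define z where "z = scaleC (1 / f z0) z0"
  have fz: "f z = 1" using z0 unfolding z_def sc by simp
  have f0: "f 0 = 0" using sc[of 0 0] by simp
  have fminus: "f (- x) = - f x" for x using sc[of "-1" x] by (simp add: scaleC_minus_one)
  have fdiff: "f (x - y) = f x - f y" for x y
    using add[of x "- y"] fminus[of y] by simp
  have fR: "f (scaleR r x) = complex_of_real r * f x" for r x
    by (simp add: scaleR_scaleC sc)
  define M where "M = {m. f m = 0}"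
  define D where "D = (\<lambda>m. (norm (z - m))^2) ` M"
  define d where "d = Inf D"
  have D_ne: "D \<noteq> {}" unfolding D_def M_def using f0 by auto
  have D_bdd: "bdd_below D" unfolding D_def by (intro bdd_belowI[of _ 0]) auto
  have d_le: "d \<le> (norm (z - m))^2" if "m \<in> M" for m
    unfolding d_def D_def using that D_bdd unfolding D_def by (intro cInf_lower) auto
  have "\<exists>m. m \<in> M \<and> (norm (z - m))^2 < d + inverse (real (Suc n))" for n
  proof -
    have "Inf D < d + inverse (real (Suc n))" unfolding d_def by simp
    from cInf_lessD[OF D_ne this] show ?thesis unfolding D_def by auto
  qed
  then obtain m where mM: "\<And>n. m n \<in> M" and mlt: "\<And>n. (norm (z - m n))^2 < d + inverse (real (Suc n))"
    by metis
  have mid: "(norm (m n - m k))^2 \<le> 2 * inverse (real (Suc n)) + 2 * inverse (real (Suc k))" for n k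
  proof -
    define c where "c = scaleR (1/2) (m n + m k)"
    have cM: "c \<in> M" using mM[of n] mM[of k] unfolding M_def c_def by (simp add: fR add)
    have e1: "(z - m n) + (z - m k) = scaleR 2 (z - c)" unfolding c_def
      by (simp add: algebra_simps scaleR_2)
    have e2: "(z - m n) - (z - m k) = - (m n - m k)" by simp
    have P: "(norm (scaleR 2 (z - c)))^2 + (norm (- (m n - m k)))^2
          = 2 * (norm (z - m n))^2 + 2 * (norm (z - m k))^2"
      using parallelogram[of "z - m n" "z - m k", unfolded e1 e2] .
    have n2: "norm (scaleR 2 (z - c)) = 2 * norm (z - c)" by simp
    have n3: "norm (- (m n - m k)) = norm (m n - m k)" by (rule norm_minus_cancel)
    have "4 * (norm (z - c))^2 + (norm (m n - m k))^2
          = 2 * (norm (z - m n))^2 + 2 * (norm (z - m k))^2"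
      using P unfolding n2 n3 power_mult_distrib by simp
    moreover have "d \<le> (norm (z - c))^2" using d_le cM by blast
    ultimately show ?thesis using mlt[of n] mlt[of k] by linarith
  qed
  have "Cauchy m"
  proof (rule metric_CauchyI)
    fix e :: real assume e: "0 < e"
    obtain N where N: "inverse (real (Suc N)) < e^2 / 4"
      using reals_Archimedean[of "e^2/4"] e by auto
    show "\<exists>M. \<forall>mm\<ge>M. \<forall>n\<ge>M. dist (m mm) (m n) < e"
    proof (intro exI allI impI)
      fix n k assume nN: "n \<ge> N" and kN: "k \<ge> N"
      have "inverse (real (Suc n)) \<le> inverse (real (Suc N))"
        using nN by (simp add: le_imp_inverse_le)
      moreover have "inverse (real (Suc k)) \<le> inverse (real (Suc N))"
        using kN by (simp add: le_imp_inverse_le)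
      ultimately have "(norm (m n - m k))^2 < e^2" using mid[of n k] N by linarith
      then have "norm (m n - m k) < e" using e by (simp add: power_less_imp_less_base)
      then show "dist (m n) (m k) < e" by (simp add: dist_norm)
    qed
  qed
  then obtain mm where lim: "m \<longlonglongrightarrow> mm" using Cauchy_convergent convergent_def by blast
  have "cmod (f mm) \<le> 0"
  proof (rule LIMSEQ_le_const)
    have "(\<lambda>n. norm (m n - mm)) \<longlonglongrightarrow> 0"
      using tendsto_norm_zero[OF Lim_null[THEN iffD1, OF lim]] .
    then show "(\<lambda>n. norm (m n - mm) * K) \<longlonglongrightarrow> 0"
      by (rule tendsto_mult_left_zero)
    have "cmod (f mm) \<le> norm (m n - mm) * K" for n
    proof -
      have "f (m n - mm) = - f mm" using mM[of n] unfolding M_def fdiff by simp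
      then have "cmod (f mm) = cmod (f (m n - mm))" by simp
      also have "\<dots> \<le> norm (m n - mm) * K" by (rule bd)
      finally show ?thesis .
    qed
    then show "\<exists>N. \<forall>n\<ge>N. cmod (f mm) \<le> norm (m n - mm) * K" by blast
  qed
  then have mmM: "mm \<in> M" unfolding M_def by simp
  have "(norm (z - mm))^2 \<le> d"
  proof (rule LIMSEQ_le)
    show "(\<lambda>n. (norm (z - m n))^2) \<longlonglongrightarrow> (norm (z - mm))^2"
      by (intro tendsto_intros lim)
    show "(\<lambda>n. d + inverse (real (Suc n))) \<longlonglongrightarrow> d"
      using tendsto_add[OF tendsto_const LIMSEQ_inverse_real_of_nat] by simp
    show "\<exists>N. \<forall>n\<ge>N. (norm (z - m n))^2 \<le> d + inverse (real (Suc n))"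
      using mlt less_imp_le by blast
  qed
  define u where "u = z - mm"
  have fu: "f u = 1" unfolding u_def fdiff fz using mmM unfolding M_def by simp
  have umin: "(norm u)^2 \<le> (norm (u - scaleC t v))^2" if "v \<in> M" for v t
  proof -
    have "mm + scaleC t v \<in> M" using mmM that unfolding M_def by (simp add: add sc)
    then have "d \<le> (norm (z - (mm + scaleC t v)))^2" by (rule d_le)
    moreover have "z - (mm + scaleC t v) = u - scaleC t v" unfolding u_def by (simp add: algebra_simps)
    ultimately have "d \<le> (norm (u - scaleC t v))^2" by simp
    moreover have "(norm u)^2 \<le> d" unfolding u_def by fact
    ultimately show ?thesis by linarith
  qed
  have orth: "cinner v u = 0" if "v \<in> M" for v
  proof (cases "v = 0")
    case True then show ?thesis by simp
  next
    case False
    then have nv: "norm v > 0" by simp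
    define p where "p = cinner v u"
    define t where "t = p / complex_of_real ((norm v)^2)"
    have "(norm u)^2 \<le> (norm (u - scaleC t v))^2" using umin that by blast
    also have "\<dots> = (norm u)^2 - 2 * Re (cnj t * p) + (cmod t)^2 * (norm v)^2"
      unfolding norm_diff_scaleC_sq p_def ..
    also have "cnj t * p = complex_of_real ((cmod p)^2 / (norm v)^2)"
      unfolding t_def by (simp add: complex_mult_cnj cmod_power2 mult.commute)
    also have "(cmod t)^2 = (cmod p)^2 / (norm v)^4"
      unfolding t_def by (simp add: norm_divide power_divide norm_power flip: power_mult)
    finally have "(cmod p)^2 / (norm v)^2 \<le> 0" using nv
      by (simp add: power2_eq_square power4_eq_xxxx field_simps)
    then have "(cmod p)^2 \<le> 0" using nv by (simp add: divide_le_0_iff)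
    then show ?thesis unfolding p_def by simp
  qed
  have u0: "u \<noteq> 0" using fu f0 by auto
  define y where "y = scaleC (1 / cnj (cinner u u)) u"
  show ?thesis
  proof (intro exI allI)
    fix x
    have "x - scaleC (f x) u \<in> M" unfolding M_def by (simp add: fdiff sc fu)
    then have "cinner (x - scaleC (f x) u) u = 0" by (rule orth)
    then have "cinner u (x - scaleC (f x) u) = 0" by (metis cinner_commute complex_cnj_zero)
    then have "cinner u x = f x * cinner u u" by (simp add: cinner_diff_right cinner_scaleC_right)
    moreover have "cinner u u \<noteq> 0" using u0 cinner_eq_zero_iff by blast
    ultimately show "f x = cinner y x" unfolding y_def by (simp add: cinner_scaleC_left)
  qed
qed



lemma bop_add: "bounded_op A \<Longrightarrow> A (x + y) = A x + A y"
  unfolding bounded_op_def by blast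

lemma bop_scaleC: "bounded_op A \<Longrightarrow> A (scaleC c x) = scaleC c (A x)"
  unfolding bounded_op_def by blast

lemma bop_bound: "bounded_op A \<Longrightarrow> \<exists>K\<ge>0. \<forall>x. norm (A x) \<le> norm x * K"
proof -
  assume "bounded_op A"
  then obtain K where K: "\<And>x. norm (A x) \<le> norm x * K" unfolding bounded_op_def by blast
  have "norm (A x) \<le> norm x * \<bar>K\<bar>" for x
    using K[of x] by (meson abs_ge_self mult_left_mono norm_ge_zero order_trans)
  then show ?thesis by (intro exI[of _ "\<bar>K\<bar>"]) auto
qed

lemma cinner_ext: "(\<And>x. cinner x a = cinner x b) \<Longrightarrow> a = (b :: 'a::complex_inner)"
proof -
  assume h: "\<And>x. cinner x a = cinner x b"
  have "cinner (a - b) (a - b) = cinner (a - b) a - cinner (a - b) b" by (rule cinner_diff_right)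
  also have "\<dots> = 0" using h by simp
  finally have "a - b = 0" using cinner_eq_zero_iff by blast
  then show ?thesis by simp
qed

lemma adj_exists:
  fixes A :: "'a::chilbert_space \<Rightarrow> 'a"
  assumes "bounded_op A"
  shows "\<exists>B. \<forall>x y. cinner (A x) y = cinner x (B y)"
proof -
  obtain K where K: "\<And>x. norm (A x) \<le> norm x * K" using bop_bound[OF assms] by blast
  have "\<exists>z. \<forall>x. cinner y (A x) = cinner z x" for y
  proof (rule riesz)
    fix x1 x2 show "cinner y (A (x1 + x2)) = cinner y (A x1) + cinner y (A x2)"
      by (simp add: bop_add[OF assms] cinner_add_right)
  next
    fix c x show "cinner y (A (scaleC c x)) = c * cinner y (A x)"
      by (simp add: bop_scaleC[OF assms] cinner_scaleC_right)
  next
    fix x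
    have "cmod (cinner y (A x)) \<le> norm y * norm (A x)" by (rule cinner_cauchy_schwarz)
    also have "\<dots> \<le> norm y * (norm x * K)" using K[of x] by (simp add: mult_left_mono)
    finally show "cmod (cinner y (A x)) \<le> norm x * (norm y * K)" by (simp add: algebra_simps)
  qed
  then obtain B where B: "\<And>y x. cinner y (A x) = cinner (B y) x" by metis
  have "cinner (A x) y = cinner x (B y)" for x y
    using B[of y x] cinner_commute[of "A x" y] cinner_commute[of x "B y"] by simp
  then show ?thesis by blast
qed

lemma adj_prop:
  fixes A :: "'a::chilbert_space \<Rightarrow> 'a"
  assumes "bounded_op A"
  shows "cinner (A x) y = cinner x (op_adj A y)"
proof -
  have "\<forall>x y. cinner (A x) y = cinner x (op_adj A y)"
    unfolding op_adj_def by (rule someI_ex[OF adj_exists[OF assms]])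
  then show ?thesis by blast
qed

lemma adj_prop2:
  fixes A :: "'a::chilbert_space \<Rightarrow> 'a"
  assumes "bounded_op A"
  shows "cinner (op_adj A y) x = cinner y (A x)"
  using adj_prop[OF assms, of x y] cinner_commute[of "op_adj A y" x] cinner_commute[of y "A x"] by simp

lemma adj_unique:
  fixes A :: "'a::chilbert_space \<Rightarrow> 'a"
  assumes "bounded_op A" and "\<And>x y. cinner (A x) y = cinner x (B y)"
  shows "op_adj A = B"
proof
  fix y show "op_adj A y = B y"
    by (rule cinner_ext) (simp add: adj_prop[OF assms(1), symmetric] assms(2))
qed

lemma bounded_adj:
  fixes A :: "'a::chilbert_space \<Rightarrow> 'a"
  assumes A: "bounded_op A"
  shows "bounded_op (op_adj A)"
  unfolding bounded_op_def
proof (intro conjI allI)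
  fix y1 y2 show "op_adj A (y1 + y2) = op_adj A y1 + op_adj A y2"
    by (rule cinner_ext) (simp add: adj_prop[OF A, symmetric] cinner_add_right)
next
  fix c y show "op_adj A (scaleC c y) = scaleC c (op_adj A y)"
    by (rule cinner_ext) (simp add: adj_prop[OF A, symmetric] cinner_scaleC_right)
next
  obtain K where K0: "K \<ge> 0" and K: "\<And>x. norm (A x) \<le> norm x * K" using bop_bound[OF A] by blast
  have "norm (op_adj A y) \<le> norm y * K" for y
  proof (cases "op_adj A y = 0")
    case True then show ?thesis using K0 by simp
  next
    case False
    define w where "w = op_adj A y"
    have "(norm w)^2 = Re (cinner w w)" by (simp add: Re_cinner_self)
    also have "cinner w w = cinner (A w) y" unfolding w_def by (simp add: adj_prop[OF A])
    also have "Re (cinner (A w) y) \<le> cmod (cinner (A w) y)" by (rule complex_Re_le_cmod)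
    also have "\<dots> \<le> norm (A w) * norm y" by (rule cinner_cauchy_schwarz)
    also have "\<dots> \<le> norm w * K * norm y" using K[of w] by (simp add: mult_right_mono)
    finally have "norm w * norm w \<le> norm w * (norm y * K)" by (simp add: power2_eq_square algebra_simps)
    moreover have "norm w > 0" using False unfolding w_def by simp
    ultimately show ?thesis unfolding w_def by simp
  qed
  then show "\<exists>K. \<forall>x. norm (op_adj A x) \<le> norm x * K" by blast
qed

lemma adj_adj:
  fixes A :: "'a::chilbert_space \<Rightarrow> 'a"
  assumes A: "bounded_op A"
  shows "op_adj (op_adj A) = A"
  by (rule adj_unique[OF bounded_adj[OF A]]) (rule adj_prop2[OF A])

lemma bounded_add:
  assumes A: "bounded_op A" and B: "bounded_op B"
  shows "bounded_op (op_add A B)"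
  unfolding bounded_op_def op_add_def
proof (intro conjI allI)
  fix x y show "A (x + y) + B (x + y) = A x + B x + (A y + B y)"
    by (simp add: bop_add[OF A] bop_add[OF B] algebra_simps)
next
  fix c x show "A (scaleC c x) + B (scaleC c x) = scaleC c (A x + B x)"
    by (simp add: bop_scaleC[OF A] bop_scaleC[OF B] scaleC_add_right)
next
  obtain K1 where K1: "\<And>x. norm (A x) \<le> norm x * K1" using bop_bound[OF A] by blast
  obtain K2 where K2: "\<And>x. norm (B x) \<le> norm x * K2" using bop_bound[OF B] by blast
  have "norm (A x + B x) \<le> norm x * (K1 + K2)" for x
    using norm_triangle_ineq[of "A x" "B x"] K1[of x] K2[of x] by (simp add: algebra_simps)
  then show "\<exists>K. \<forall>x. norm (A x + B x) \<le> norm x * K" by blast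
qed

lemma bounded_scale:
  assumes A: "bounded_op A"
  shows "bounded_op (op_scale c A)"
  unfolding bounded_op_def op_scale_def
proof (intro conjI allI)
  fix x y show "scaleC c (A (x + y)) = scaleC c (A x) + scaleC c (A y)"
    by (simp add: bop_add[OF A] scaleC_add_right)
next
  fix d x show "scaleC c (A (scaleC d x)) = scaleC d (scaleC c (A x))"
    by (simp add: bop_scaleC[OF A] scaleC_scaleC mult.commute)
next
  obtain K where K: "\<And>x. norm (A x) \<le> norm x * K" using bop_bound[OF A] by blast
  have "norm (scaleC c (A x)) \<le> norm x * (cmod c * K)" for x
  proof -
    have "norm (scaleC c (A x)) = cmod c * norm (A x)" by (rule norm_scaleC)
    also have "\<dots> \<le> cmod c * (norm x * K)" using K[of x] by (rule mult_left_mono) simp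
    finally show ?thesis by (simp add: algebra_simps)
  qed
  then show "\<exists>K. \<forall>x. norm (scaleC c (A x)) \<le> norm x * K" by blast
qed

lemma bounded_comp:
  assumes A: "bounded_op A" and B: "bounded_op B"
  shows "bounded_op (A \<circ> B)"
  unfolding bounded_op_def o_def
proof (intro conjI allI)
  fix x y show "A (B (x + y)) = A (B x) + A (B y)"
    by (simp add: bop_add[OF A] bop_add[OF B])
next
  fix c x show "A (B (scaleC c x)) = scaleC c (A (B x))"
    by (simp add: bop_scaleC[OF A] bop_scaleC[OF B])
next
  obtain K1 where K10: "K1 \<ge> 0" and K1: "\<And>x. norm (A x) \<le> norm x * K1" using bop_bound[OF A] by blast
  obtain K2 where K2: "\<And>x. norm (B x) \<le> norm x * K2" using bop_bound[OF B] by blast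
  have "norm (A (B x)) \<le> norm x * (K2 * K1)" for x
  proof -
    have "norm (A (B x)) \<le> norm (B x) * K1" by (rule K1)
    also have "\<dots> \<le> norm x * K2 * K1" using K2[of x] K10 by (simp add: mult_right_mono)
    finally show ?thesis by (simp add: algebra_simps)
  qed
  then show "\<exists>K. \<forall>x. norm (A (B x)) \<le> norm x * K" by blast
qed

lemma adj_add:
  fixes A B :: "'a::chilbert_space \<Rightarrow> 'a"
  assumes A: "bounded_op A" and B: "bounded_op B"
  shows "op_adj (op_add A B) = op_add (op_adj A) (op_adj B)"
  by (rule adj_unique[OF bounded_add[OF A B]])
     (simp add: op_add_def cinner_add_left cinner_add_right adj_prop[OF A] adj_prop[OF B])

lemma adj_scale:
  fixes A :: "'a::chilbert_space \<Rightarrow> 'a"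
  assumes A: "bounded_op A"
  shows "op_adj (op_scale c A) = op_scale (cnj c) (op_adj A)"
  by (rule adj_unique[OF bounded_scale[OF A]])
     (simp add: op_scale_def cinner_scaleC_left cinner_scaleC_right adj_prop[OF A])

lemma adj_comp:
  fixes A B :: "'a::chilbert_space \<Rightarrow> 'a"
  assumes A: "bounded_op A" and B: "bounded_op B"
  shows "op_adj (A \<circ> B) = op_adj B \<circ> op_adj A"
  by (rule adj_unique[OF bounded_comp[OF A B]])
     (simp add: adj_prop[OF A] adj_prop[OF B])

lemma bounded_Re:
  fixes A :: "'a::chilbert_space \<Rightarrow> 'a"
  assumes A: "bounded_op A"
  shows "bounded_op (op_Re A)"
  unfolding op_Re_def by (intro bounded_scale bounded_add A bounded_adj)



definition lc :: "('a::complex_inner \<Rightarrow> 'a) \<Rightarrow> ('a \<Rightarrow> 'a) \<Rightarrow> ('a \<Rightarrow> 'a) \<Rightarrow> ('a \<Rightarrow> 'a) \<Rightarrow> 'a \<Rightarrow> complex \<Rightarrow> complex \<Rightarrow> complex \<Rightarrow> complex \<Rightarrow> 'a" where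
  "lc f1 f2 f3 f4 x a b c d = scaleC a (f1 x) + scaleC b (f2 x) + scaleC c (f3 x) + scaleC d (f4 x)"

lemma lc_add: "lc f1 f2 f3 f4 x a b c d + lc f1 f2 f3 f4 x a' b' c' d' = lc f1 f2 f3 f4 x (a + a') (b + b') (c + c') (d + d')"
  unfolding lc_def by (simp add: scaleC_add_left algebra_simps)

lemma lc_scale: "scaleC k (lc f1 f2 f3 f4 x a b c d) = lc f1 f2 f3 f4 x (k * a) (k * b) (k * c) (k * d)"
  unfolding lc_def by (simp add: scaleC_add_right scaleC_scaleC)

lemma lc_cong: "a = a' \<Longrightarrow> b = b' \<Longrightarrow> c = c' \<Longrightarrow> d = d' \<Longrightarrow> lc f1 f2 f3 f4 x a b c d = lc f1 f2 f3 f4 x a' b' c' d'"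
  by simp

lemma lc_atoms:
  "f1 x = lc f1 f2 f3 f4 x 1 0 0 0"
  "f2 x = lc f1 f2 f3 f4 x 0 1 0 0"
  "f3 x = lc f1 f2 f3 f4 x 0 0 1 0"
  "f4 x = lc f1 f2 f3 f4 x 0 0 0 1"
  unfolding lc_def by (simp_all add: scaleC_one)

lemma id1:
  fixes T S :: "'a::chilbert_space \<Rightarrow> 'a"
  assumes T: "bounded_op T" and S: "bounded_op S"
    and h: "(c = 1 \<and> B = A \<and> \<sigma> = -1) \<or> (c = -\<i> \<and> B = \<i> * A \<and> \<sigma> = 1)"
  shows "op_Re (op_scale A (T \<circ> S)) =
    op_add (op_add (op_scale (c/2) (T \<circ> op_Re (op_scale B S))) (op_scale (cnj c/2) (op_Re (op_scale B S) \<circ> op_adj T)))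
      (op_scale (1/2) (op_Re (op_scale A (op_add (T \<circ> S) (op_scale \<sigma> (S \<circ> op_adj T))))))"
proof -
  have aT: "bounded_op (op_adj T)" and aS: "bounded_op (op_adj S)" using T S by (auto intro: bounded_adj)
  let ?L = "lc (T \<circ> S) (op_adj S \<circ> op_adj T) (T \<circ> op_adj S) (S \<circ> op_adj T)"
  have at: "\<And>x. T (S x) = ?L x 1 0 0 0" "\<And>x. op_adj S (op_adj T x) = ?L x 0 1 0 0"
     "\<And>x. T (op_adj S x) = ?L x 0 0 1 0" "\<And>x. S (op_adj T x) = ?L x 0 0 0 1"
    unfolding lc_def by (simp_all add: scaleC_one)
  show ?thesis
    unfolding op_Re_def
    apply (simp only: adj_scale adj_add adj_comp adj_adj T S aT aS bounded_comp bounded_add bounded_scale bounded_adj)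
    apply (rule ext)
    apply (simp only: op_add_def op_scale_def comp_apply bop_add[OF T] bop_add[OF S] bop_add[OF aT] bop_add[OF aS]
       bop_scaleC[OF T] bop_scaleC[OF S] bop_scaleC[OF aT] bop_scaleC[OF aS] at lc_add lc_scale)
    apply (rule lc_cong)
    using h apply (auto simp: field_simps)
    done
qed

lemma id2:
  fixes T S :: "'a::chilbert_space \<Rightarrow> 'a"
  assumes T: "bounded_op T" and S: "bounded_op S"
    and h: "(c = 1 \<and> B = A \<and> \<sigma> = 1) \<or> (c = -\<i> \<and> B = \<i> * A \<and> \<sigma> = -1)"
  shows "op_Re (op_scale A (op_add (T \<circ> S) (op_scale \<sigma> (S \<circ> op_adj T)))) =
    op_add (op_scale c (T \<circ> op_Re (op_scale B S))) (op_scale (cnj c) (op_Re (op_scale B S) \<circ> op_adj T))"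
proof -
  have aT: "bounded_op (op_adj T)" and aS: "bounded_op (op_adj S)" using T S by (auto intro: bounded_adj)
  let ?L = "lc (T \<circ> S) (op_adj S \<circ> op_adj T) (T \<circ> op_adj S) (S \<circ> op_adj T)"
  have at: "\<And>x. T (S x) = ?L x 1 0 0 0" "\<And>x. op_adj S (op_adj T x) = ?L x 0 1 0 0"
     "\<And>x. T (op_adj S x) = ?L x 0 0 1 0" "\<And>x. S (op_adj T x) = ?L x 0 0 0 1"
    unfolding lc_def by (simp_all add: scaleC_one)
  show ?thesis
    unfolding op_Re_def
    apply (simp only: adj_scale adj_add adj_comp adj_adj T S aT aS bounded_comp bounded_add bounded_scale bounded_adj)
    apply (rule ext)
    apply (simp only: op_add_def op_scale_def comp_apply bop_add[OF T] bop_add[OF S] bop_add[OF aT] bop_add[OF aS]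
       bop_scaleC[OF T] bop_scaleC[OF S] bop_scaleC[OF aT] bop_scaleC[OF aS] at lc_add lc_scale)
    apply (rule lc_cong)
    using h apply (auto simp: field_simps)
    done
qed

lemma id3:
  fixes T S :: "'a::chilbert_space \<Rightarrow> 'a"
  assumes T: "bounded_op T" and S: "bounded_op S"
    and h: "(c = 1 \<and> B = A \<and> \<sigma> = -1) \<or> (c = -\<i> \<and> B = \<i> * A \<and> \<sigma> = 1)"
  shows "op_Re (op_scale A (T \<circ> S)) =
    op_add (op_add (op_scale (c/2) (op_Re (op_scale B T) \<circ> S)) (op_scale (cnj c/2) (op_adj S \<circ> op_Re (op_scale B T))))
      (op_scale (1/2) (op_Re (op_scale A (op_add (T \<circ> S) (op_scale \<sigma> (op_adj S \<circ> T))))))"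
proof -
  have aT: "bounded_op (op_adj T)" and aS: "bounded_op (op_adj S)" using T S by (auto intro: bounded_adj)
  let ?L = "lc (T \<circ> S) (op_adj S \<circ> op_adj T) (op_adj T \<circ> S) (op_adj S \<circ> T)"
  have at: "\<And>x. T (S x) = ?L x 1 0 0 0" "\<And>x. op_adj S (op_adj T x) = ?L x 0 1 0 0"
     "\<And>x. op_adj T (S x) = ?L x 0 0 1 0" "\<And>x. op_adj S (T x) = ?L x 0 0 0 1"
    unfolding lc_def by (simp_all add: scaleC_one)
  show ?thesis
    unfolding op_Re_def
    apply (simp only: adj_scale adj_add adj_comp adj_adj T S aT aS bounded_comp bounded_add bounded_scale bounded_adj)
    apply (rule ext)
    apply (simp only: op_add_def op_scale_def comp_apply bop_add[OF T] bop_add[OF S] bop_add[OF aT] bop_add[OF aS]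
       bop_scaleC[OF T] bop_scaleC[OF S] bop_scaleC[OF aT] bop_scaleC[OF aS] at lc_add lc_scale)
    apply (rule lc_cong)
    using h apply (auto simp: field_simps)
    done
qed

lemma id4:
  fixes T S :: "'a::chilbert_space \<Rightarrow> 'a"
  assumes T: "bounded_op T" and S: "bounded_op S"
    and h: "(c = 1 \<and> B = A \<and> \<sigma> = 1) \<or> (c = -\<i> \<and> B = \<i> * A \<and> \<sigma> = -1)"
  shows "op_Re (op_scale A (op_add (T \<circ> S) (op_scale \<sigma> (op_adj S \<circ> T)))) =
    op_add (op_scale c (op_Re (op_scale B T) \<circ> S)) (op_scale (cnj c) (op_adj S \<circ> op_Re (op_scale B T)))"
proof -
  have aT: "bounded_op (op_adj T)" and aS: "bounded_op (op_adj S)" using T S by (auto intro: bounded_adj)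
  let ?L = "lc (T \<circ> S) (op_adj S \<circ> op_adj T) (op_adj T \<circ> S) (op_adj S \<circ> T)"
  have at: "\<And>x. T (S x) = ?L x 1 0 0 0" "\<And>x. op_adj S (op_adj T x) = ?L x 0 1 0 0"
     "\<And>x. op_adj T (S x) = ?L x 0 0 1 0" "\<And>x. op_adj S (T x) = ?L x 0 0 0 1"
    unfolding lc_def by (simp_all add: scaleC_one)
  show ?thesis
    unfolding op_Re_def
    apply (simp only: adj_scale adj_add adj_comp adj_adj T S aT aS bounded_comp bounded_add bounded_scale bounded_adj)
    apply (rule ext)
    apply (simp only: op_add_def op_scale_def comp_apply bop_add[OF T] bop_add[OF S] bop_add[OF aT] bop_add[OF aS]
       bop_scaleC[OF T] bop_scaleC[OF S] bop_scaleC[OF aT] bop_scaleC[OF aS] at lc_add lc_scale)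
    apply (rule lc_cong)
    using h apply (auto simp: field_simps)
    done
qed

lemma id5:
  fixes T :: "'a::chilbert_space \<Rightarrow> 'a"
  assumes T: "bounded_op T"
  shows "T = op_add (op_Re T) (op_scale \<i> (op_Re (op_scale (-\<i>) T)))"
proof -
  have aT: "bounded_op (op_adj T)" using T by (auto intro: bounded_adj)
  let ?L = "lc T (op_adj T) (\<lambda>x. 0) (\<lambda>x. 0)"
  have at: "\<And>x. T x = ?L x 1 0 0 0" "\<And>x. op_adj T x = ?L x 0 1 0 0"
    unfolding lc_def by (simp_all add: scaleC_one)
  show ?thesis
    unfolding op_Re_def
    apply (simp only: adj_scale adj_add adj_adj T aT bounded_add bounded_scale bounded_adj)
    apply (rule ext)
    apply (simp only: op_add_def op_scale_def at lc_add lc_scale)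
    apply (rule lc_cong)
    apply (auto simp: field_simps)
    done
qed



lemma exp_shift: "\<i> * exp (\<i> * complex_of_real t) = exp (\<i> * complex_of_real (t + pi/2))"
proof -
  have h: "exp (\<i> * complex_of_real (pi/2)) = \<i>" by (simp add: exp_eq_polar)
  have "exp (\<i> * complex_of_real (t + pi/2)) = exp (\<i> * complex_of_real t) * exp (\<i> * complex_of_real (pi/2))"
    by (simp only: of_real_add distrib_left exp_add)
  then show ?thesis using h by (simp add: mult.commute)
qed

lemma exp_mi: "exp (\<i> * complex_of_real (- pi/2)) = - \<i>"
  by (simp add: exp_eq_polar)

lemma exp_0': "exp (\<i> * complex_of_real 0) = 1"
  by simp

context
  fixes N :: "('a::chilbert_space \<Rightarrow> 'a) \<Rightarrow> real"
  assumes alg: "is_algebra_norm N" and sa: "is_selfadjoint_norm N"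
begin

lemma N_nonneg: "bounded_op A \<Longrightarrow> 0 \<le> N A"
  using alg unfolding is_algebra_norm_def is_op_norm_def by blast

lemma N_add: "bounded_op A \<Longrightarrow> bounded_op B \<Longrightarrow> N (op_add A B) \<le> N A + N B"
  using alg unfolding is_algebra_norm_def is_op_norm_def by blast

lemma N_scale: "bounded_op A \<Longrightarrow> N (op_scale c A) = cmod c * N A"
  using alg unfolding is_algebra_norm_def is_op_norm_def by blast

lemma N_comp: "bounded_op A \<Longrightarrow> bounded_op B \<Longrightarrow> N (A \<circ> B) \<le> N A * N B"
  using alg unfolding is_algebra_norm_def by blast

lemma N_adj: "bounded_op A \<Longrightarrow> N (op_adj A) = N A"
  using sa unfolding is_selfadjoint_norm_def by blast

lemma N_Re_le: "bounded_op A \<Longrightarrow> N (op_Re A) \<le> N A"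
proof -
  assume A: "bounded_op A"
  have "N (op_Re A) = cmod (1/2) * N (op_add A (op_adj A))"
    unfolding op_Re_def by (intro N_scale bounded_add A bounded_adj)
  also have "\<dots> \<le> cmod (1/2) * (N A + N (op_adj A))"
    by (intro mult_left_mono N_add A bounded_adj) simp
  finally show ?thesis using N_adj[OF A] by simp
qed

lemma w_bdd: "bounded_op A \<Longrightarrow> bdd_above (range (\<lambda>\<theta>::real. N (op_Re (op_scale (exp (\<i> * complex_of_real \<theta>)) A))))"
proof -
  assume A: "bounded_op A"
  have "N (op_Re (op_scale (exp (\<i> * complex_of_real \<theta>)) A)) \<le> N A" for \<theta>
  proof -
    have "N (op_Re (op_scale (exp (\<i> * complex_of_real \<theta>)) A)) \<le> N (op_scale (exp (\<i> * complex_of_real \<theta>)) A)"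
      by (intro N_Re_le bounded_scale A)
    also have "\<dots> = N A" using N_scale[OF A] by simp
    finally show ?thesis .
  qed
  then show ?thesis by (intro bdd_aboveI2) 
qed

lemma w_upper: "bounded_op A \<Longrightarrow> N (op_Re (op_scale (exp (\<i> * complex_of_real \<theta>)) A)) \<le> w_N N A"
  unfolding w_N_def by (rule cSUP_upper[OF _ w_bdd]) auto

lemma w_least: "(\<And>\<theta>. N (op_Re (op_scale (exp (\<i> * complex_of_real \<theta>)) A)) \<le> M) \<Longrightarrow> w_N N A \<le> M"
  unfolding w_N_def by (rule cSUP_least) auto

lemma w_nonneg: "bounded_op A \<Longrightarrow> 0 \<le> w_N N A"
  using w_upper[of A 0] N_nonneg[of "op_Re (op_scale (exp (\<i> * complex_of_real 0)) A)"]
  by (meson bounded_Re bounded_scale order_trans)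

lemma w_upper_B: "bounded_op A \<Longrightarrow> B = exp (\<i> * complex_of_real \<theta>) \<or> B = \<i> * exp (\<i> * complex_of_real \<theta>)
   \<Longrightarrow> N (op_Re (op_scale B A)) \<le> w_N N A"
  using w_upper[of A \<theta>] w_upper[of A "\<theta> + pi/2"] exp_shift[of \<theta>] by auto

lemma N_le_2w: "bounded_op T \<Longrightarrow> N T \<le> 2 * w_N N T"
proof -
  assume T: "bounded_op T"
  have "N T = N (op_add (op_Re T) (op_scale \<i> (op_Re (op_scale (-\<i>) T))))"
    using id5[OF T] by simp
  also have "\<dots> \<le> N (op_Re T) + N (op_scale \<i> (op_Re (op_scale (-\<i>) T)))"
    by (intro N_add bounded_Re bounded_scale T)
  also have "N (op_scale \<i> (op_Re (op_scale (-\<i>) T))) = N (op_Re (op_scale (-\<i>) T))"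
    using N_scale[OF bounded_Re[OF bounded_scale[OF T]]] by simp
  also have "N (op_Re T) \<le> w_N N T"
    using w_upper[OF T, of 0] by (simp add: op_scale_def scaleC_one)
  also have "N (op_Re (op_scale (-\<i>) T)) \<le> w_N N T"
    using w_upper[OF T, of "- pi/2"] exp_mi by simp
  finally show ?thesis by simp
qed

lemma combo3:
  assumes "bounded_op X1" "bounded_op X2" "bounded_op X3"
  shows "N (op_add (op_add (op_scale c1 X1) (op_scale c2 X2)) (op_scale c3 X3))
     \<le> cmod c1 * N X1 + cmod c2 * N X2 + cmod c3 * N X3"
proof -
  have "N (op_add (op_add (op_scale c1 X1) (op_scale c2 X2)) (op_scale c3 X3))
      \<le> N (op_add (op_scale c1 X1) (op_scale c2 X2)) + N (op_scale c3 X3)"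
    by (intro N_add bounded_add bounded_scale assms)
  also have "N (op_add (op_scale c1 X1) (op_scale c2 X2)) \<le> N (op_scale c1 X1) + N (op_scale c2 X2)"
    by (intro N_add bounded_scale assms)
  finally show ?thesis using N_scale assms by simp
qed

lemma combo2:
  assumes "bounded_op X1" "bounded_op X2"
  shows "N (op_add (op_scale c1 X1) (op_scale c2 X2)) \<le> cmod c1 * N X1 + cmod c2 * N X2"
proof -
  have "N (op_add (op_scale c1 X1) (op_scale c2 X2)) \<le> N (op_scale c1 X1) + N (op_scale c2 X2)"
    by (intro N_add bounded_scale assms)
  then show ?thesis using N_scale assms by simp
qed

end



context
  fixes N :: "('a::chilbert_space \<Rightarrow> 'a) \<Rightarrow> real"
  assumes alg: "is_algebra_norm N" and sa: "is_selfadjoint_norm N"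
begin

lemma choose_cB1:
  assumes "\<sigma> = 1 \<or> \<sigma> = -1"
  obtains c B where "(c = 1 \<and> B = A \<and> \<sigma> = -1) \<or> (c = -\<i> \<and> B = \<i> * A \<and> \<sigma> = 1)"
    "B = A \<or> B = \<i> * A" "cmod c = 1"
proof -
  from assms consider "\<sigma> = 1" | "\<sigma> = -1" by blast
  then show ?thesis
  proof cases
    case 1 then show ?thesis using that[of "-\<i>" "\<i> * A"] by simp
  next
    case 2 then show ?thesis using that[of 1 A] by simp
  qed
qed

lemma choose_cB2:
  assumes "\<sigma> = 1 \<or> \<sigma> = -1"
  obtains c B where "(c = 1 \<and> B = A \<and> \<sigma> = 1) \<or> (c = -\<i> \<and> B = \<i> * A \<and> \<sigma> = -1)"
    "B = A \<or> B = \<i> * A" "cmod c = 1"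
proof -
  from assms consider "\<sigma> = 1" | "\<sigma> = -1" by blast
  then show ?thesis
  proof cases
    case 1 then show ?thesis using that[of 1 A] by simp
  next
    case 2 then show ?thesis using that[of "-\<i>" "\<i> * A"] by simp
  qed
qed

lemma fam1:
  fixes T S :: "'a \<Rightarrow> 'a"
  assumes T: "bounded_op T" and S: "bounded_op S" and sg: "\<sigma> = 1 \<or> \<sigma> = -1"
  shows "w_N N (T \<circ> S) \<le> N T * w_N N S + 1/2 * w_N N (op_add (T \<circ> S) (op_scale \<sigma> (S \<circ> op_adj T)))"
proof (rule w_least[OF alg sa])
  fix \<theta> :: real
  define A where "A = exp (\<i> * complex_of_real \<theta>)"
  let ?X = "op_add (T \<circ> S) (op_scale \<sigma> (S \<circ> op_adj T))"
  have aT: "bounded_op (op_adj T)" using T by (rule bounded_adj)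
  have X: "bounded_op ?X" by (intro bounded_add bounded_comp bounded_scale T S aT)
  obtain c B where h: "(c = 1 \<and> B = A \<and> \<sigma> = -1) \<or> (c = -\<i> \<and> B = \<i> * A \<and> \<sigma> = 1)"
    and hB: "B = A \<or> B = \<i> * A" and cm: "cmod c = 1" using choose_cB1[OF sg] by blast
  define R where "R = op_Re (op_scale B S)"
  have R: "bounded_op R" unfolding R_def by (intro bounded_Re bounded_scale S)
  have RA: "bounded_op (op_Re (op_scale A ?X))" by (intro bounded_Re bounded_scale X)
  have NR: "N R \<le> w_N N S" unfolding R_def using w_upper_B[OF alg sa S, of B \<theta>] hB unfolding A_def by blast
  have NRA: "N (op_Re (op_scale A ?X)) \<le> w_N N ?X" unfolding A_def by (rule w_upper[OF alg sa X])
  have NT: "0 \<le> N T" by (rule N_nonneg[OF alg sa T])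
  have c1: "N (T \<circ> R) \<le> N T * w_N N S"
    using N_comp[OF alg sa T R] mult_left_mono[OF NR NT] by linarith
  have c2: "N (R \<circ> op_adj T) \<le> N T * w_N N S"
    using N_comp[OF alg sa R aT] N_adj[OF alg sa T] mult_right_mono[OF NR NT] by (simp add: mult.commute)
  have "N (op_Re (op_scale A (T \<circ> S))) =
      N (op_add (op_add (op_scale (c/2) (T \<circ> R)) (op_scale (cnj c/2) (R \<circ> op_adj T))) (op_scale (1/2) (op_Re (op_scale A ?X))))"
    unfolding R_def using id1[OF T S h] by simp
  also have "\<dots> \<le> cmod (c/2) * N (T \<circ> R) + cmod (cnj c/2) * N (R \<circ> op_adj T) + cmod (1/2) * N (op_Re (op_scale A ?X))"
    by (intro combo3[OF alg sa] bounded_comp T R aT RA)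
  also have "\<dots> = 1/2 * N (T \<circ> R) + 1/2 * N (R \<circ> op_adj T) + 1/2 * N (op_Re (op_scale A ?X))"
    using cm by (simp add: norm_divide)
  finally show "N (op_Re (op_scale (exp (\<i> * complex_of_real \<theta>)) (T \<circ> S))) \<le> N T * w_N N S + 1/2 * w_N N ?X"
    unfolding A_def[symmetric] using c1 c2 NRA by linarith
qed

lemma fam1b:
  fixes T S :: "'a \<Rightarrow> 'a"
  assumes T: "bounded_op T" and S: "bounded_op S" and sg: "\<sigma> = 1 \<or> \<sigma> = -1"
  shows "w_N N (op_add (T \<circ> S) (op_scale \<sigma> (S \<circ> op_adj T))) \<le> 2 * (N T * w_N N S)"
proof (rule w_least[OF alg sa])
  fix \<theta> :: real
  define A where "A = exp (\<i> * complex_of_real \<theta>)"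
  let ?X = "op_add (T \<circ> S) (op_scale \<sigma> (S \<circ> op_adj T))"
  have aT: "bounded_op (op_adj T)" using T by (rule bounded_adj)
  obtain c B where h: "(c = 1 \<and> B = A \<and> \<sigma> = 1) \<or> (c = -\<i> \<and> B = \<i> * A \<and> \<sigma> = -1)"
    and hB: "B = A \<or> B = \<i> * A" and cm: "cmod c = 1" using choose_cB2[OF sg] by blast
  define R where "R = op_Re (op_scale B S)"
  have R: "bounded_op R" unfolding R_def by (intro bounded_Re bounded_scale S)
  have NR: "N R \<le> w_N N S" unfolding R_def using w_upper_B[OF alg sa S, of B \<theta>] hB unfolding A_def by blast
  have NT: "0 \<le> N T" by (rule N_nonneg[OF alg sa T])
  have c1: "N (T \<circ> R) \<le> N T * w_N N S"
    using N_comp[OF alg sa T R] mult_left_mono[OF NR NT] by linarith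
  have c2: "N (R \<circ> op_adj T) \<le> N T * w_N N S"
    using N_comp[OF alg sa R aT] N_adj[OF alg sa T] mult_right_mono[OF NR NT] by (simp add: mult.commute)
  have "N (op_Re (op_scale A ?X)) =
      N (op_add (op_scale c (T \<circ> R)) (op_scale (cnj c) (R \<circ> op_adj T)))"
    unfolding R_def using id2[OF T S h] by simp
  also have "\<dots> \<le> cmod c * N (T \<circ> R) + cmod (cnj c) * N (R \<circ> op_adj T)"
    by (intro combo2[OF alg sa] bounded_comp T R aT)
  finally show "N (op_Re (op_scale (exp (\<i> * complex_of_real \<theta>)) ?X)) \<le> 2 * (N T * w_N N S)"
    unfolding A_def[symmetric] using c1 c2 cm by simp
qed

lemma fam2:
  fixes T S :: "'a \<Rightarrow> 'a"
  assumes T: "bounded_op T" and S: "bounded_op S" and sg: "\<sigma> = 1 \<or> \<sigma> = -1"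
  shows "w_N N (T \<circ> S) \<le> N S * w_N N T + 1/2 * w_N N (op_add (T \<circ> S) (op_scale \<sigma> (op_adj S \<circ> T)))"
proof (rule w_least[OF alg sa])
  fix \<theta> :: real
  define A where "A = exp (\<i> * complex_of_real \<theta>)"
  let ?X = "op_add (T \<circ> S) (op_scale \<sigma> (op_adj S \<circ> T))"
  have aS: "bounded_op (op_adj S)" using S by (rule bounded_adj)
  have X: "bounded_op ?X" by (intro bounded_add bounded_comp bounded_scale T S aS)
  obtain c B where h: "(c = 1 \<and> B = A \<and> \<sigma> = -1) \<or> (c = -\<i> \<and> B = \<i> * A \<and> \<sigma> = 1)"
    and hB: "B = A \<or> B = \<i> * A" and cm: "cmod c = 1" using choose_cB1[OF sg] by blast
  define R where "R = op_Re (op_scale B T)"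
  have R: "bounded_op R" unfolding R_def by (intro bounded_Re bounded_scale T)
  have RA: "bounded_op (op_Re (op_scale A ?X))" by (intro bounded_Re bounded_scale X)
  have NR: "N R \<le> w_N N T" unfolding R_def using w_upper_B[OF alg sa T, of B \<theta>] hB unfolding A_def by blast
  have NRA: "N (op_Re (op_scale A ?X)) \<le> w_N N ?X" unfolding A_def by (rule w_upper[OF alg sa X])
  have NS: "0 \<le> N S" by (rule N_nonneg[OF alg sa S])
  have c1: "N (R \<circ> S) \<le> N S * w_N N T"
    using N_comp[OF alg sa R S] mult_right_mono[OF NR NS] by (simp add: mult.commute)
  have c2: "N (op_adj S \<circ> R) \<le> N S * w_N N T"
    using N_comp[OF alg sa aS R] N_adj[OF alg sa S] mult_left_mono[OF NR NS] by simp
  have "N (op_Re (op_scale A (T \<circ> S))) =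
      N (op_add (op_add (op_scale (c/2) (R \<circ> S)) (op_scale (cnj c/2) (op_adj S \<circ> R))) (op_scale (1/2) (op_Re (op_scale A ?X))))"
    unfolding R_def using id3[OF T S h] by simp
  also have "\<dots> \<le> cmod (c/2) * N (R \<circ> S) + cmod (cnj c/2) * N (op_adj S \<circ> R) + cmod (1/2) * N (op_Re (op_scale A ?X))"
    by (intro combo3[OF alg sa] bounded_comp S R aS RA)
  also have "\<dots> = 1/2 * N (R \<circ> S) + 1/2 * N (op_adj S \<circ> R) + 1/2 * N (op_Re (op_scale A ?X))"
    using cm by (simp add: norm_divide)
  finally show "N (op_Re (op_scale (exp (\<i> * complex_of_real \<theta>)) (T \<circ> S))) \<le> N S * w_N N T + 1/2 * w_N N ?X"
    unfolding A_def[symmetric] using c1 c2 NRA by linarith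
qed

lemma fam2b:
  fixes T S :: "'a \<Rightarrow> 'a"
  assumes T: "bounded_op T" and S: "bounded_op S" and sg: "\<sigma> = 1 \<or> \<sigma> = -1"
  shows "w_N N (op_add (T \<circ> S) (op_scale \<sigma> (op_adj S \<circ> T))) \<le> 2 * (N S * w_N N T)"
proof (rule w_least[OF alg sa])
  fix \<theta> :: real
  define A where "A = exp (\<i> * complex_of_real \<theta>)"
  let ?X = "op_add (T \<circ> S) (op_scale \<sigma> (op_adj S \<circ> T))"
  have aS: "bounded_op (op_adj S)" using S by (rule bounded_adj)
  obtain c B where h: "(c = 1 \<and> B = A \<and> \<sigma> = 1) \<or> (c = -\<i> \<and> B = \<i> * A \<and> \<sigma> = -1)"
    and hB: "B = A \<or> B = \<i> * A" and cm: "cmod c = 1" using choose_cB2[OF sg] by blast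
  define R where "R = op_Re (op_scale B T)"
  have R: "bounded_op R" unfolding R_def by (intro bounded_Re bounded_scale T)
  have NR: "N R \<le> w_N N T" unfolding R_def using w_upper_B[OF alg sa T, of B \<theta>] hB unfolding A_def by blast
  have NS: "0 \<le> N S" by (rule N_nonneg[OF alg sa S])
  have c1: "N (R \<circ> S) \<le> N S * w_N N T"
    using N_comp[OF alg sa R S] mult_right_mono[OF NR NS] by (simp add: mult.commute)
  have c2: "N (op_adj S \<circ> R) \<le> N S * w_N N T"
    using N_comp[OF alg sa aS R] N_adj[OF alg sa S] mult_left_mono[OF NR NS] by simp
  have "N (op_Re (op_scale A ?X)) =
      N (op_add (op_scale c (R \<circ> S)) (op_scale (cnj c) (op_adj S \<circ> R)))"
    unfolding R_def using id4[OF T S h] by simp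
  also have "\<dots> \<le> cmod c * N (R \<circ> S) + cmod (cnj c) * N (op_adj S \<circ> R)"
    by (intro combo2[OF alg sa] bounded_comp S R aS)
  finally show "N (op_Re (op_scale (exp (\<i> * complex_of_real \<theta>)) ?X)) \<le> 2 * (N S * w_N N T)"
    unfolding A_def[symmetric] using c1 c2 cm by simp
qed

end

theorem theorem2p8:
  fixes T S :: "'a::chilbert_space \<Rightarrow> 'a"
    and N :: "('a \<Rightarrow> 'a) \<Rightarrow> real"
    and \<sigma> :: complex
  assumes "bounded_op T" and "bounded_op S"
    and "is_algebra_norm N" and "is_selfadjoint_norm N"
    and "\<sigma> = 1 \<or> \<sigma> = -1"
  shows "w_N N (T \<circ> S)
           \<le> min (N T * w_N N S + 1/2 * w_N N (op_add (T \<circ> S) (op_scale \<sigma> (S \<circ> op_adj T))))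
                 (N S * w_N N T + 1/2 * w_N N (op_add (T \<circ> S) (op_scale \<sigma> (op_adj S \<circ> T))))
       \<and> min (N T * w_N N S + 1/2 * w_N N (op_add (T \<circ> S) (op_scale \<sigma> (S \<circ> op_adj T))))
             (N S * w_N N T + 1/2 * w_N N (op_add (T \<circ> S) (op_scale \<sigma> (op_adj S \<circ> T))))
           \<le> 2 * min (N T * w_N N S) (N S * w_N N T)
       \<and> 2 * min (N T * w_N N S) (N S * w_N N T) \<le> 4 * w_N N T * w_N N S"
proof -
  note T = assms(1) and S = assms(2) and alg = assms(3) and sa = assms(4) and sg = assms(5)
  have f1: "w_N N (T \<circ> S) \<le> N T * w_N N S + 1/2 * w_N N (op_add (T \<circ> S) (op_scale \<sigma> (S \<circ> op_adj T)))"
    by (rule fam1[OF alg sa T S sg])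
  have f2: "w_N N (T \<circ> S) \<le> N S * w_N N T + 1/2 * w_N N (op_add (T \<circ> S) (op_scale \<sigma> (op_adj S \<circ> T)))"
    by (rule fam2[OF alg sa T S sg])
  have g1: "w_N N (op_add (T \<circ> S) (op_scale \<sigma> (S \<circ> op_adj T))) \<le> 2 * (N T * w_N N S)"
    by (rule fam1b[OF alg sa T S sg])
  have g2: "w_N N (op_add (T \<circ> S) (op_scale \<sigma> (op_adj S \<circ> T))) \<le> 2 * (N S * w_N N T)"
    by (rule fam2b[OF alg sa T S sg])
  have hT: "N T \<le> 2 * w_N N T" by (rule N_le_2w[OF alg sa T])
  have wS: "0 \<le> w_N N S" by (rule w_nonneg[OF alg sa S])
  have k: "N T * w_N N S \<le> 2 * w_N N T * w_N N S"
    using mult_right_mono[OF hT wS] by simp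
  have m1: "min (a + 1/2 * x) (b + 1/2 * y) \<le> 2 * min a b" if "x \<le> 2 * a" "y \<le> 2 * b" for a b x y :: real
    using that by (auto simp: min_def)
  have m2: "2 * min a b \<le> 4 * c" if "a \<le> 2 * c" for a b c :: real
    using that by (auto simp: min_def)
  show ?thesis
  proof (intro conjI)
    show "w_N N (T \<circ> S)
           \<le> min (N T * w_N N S + 1/2 * w_N N (op_add (T \<circ> S) (op_scale \<sigma> (S \<circ> op_adj T))))
                 (N S * w_N N T + 1/2 * w_N N (op_add (T \<circ> S) (op_scale \<sigma> (op_adj S \<circ> T))))"
      using f1 f2 by simp
    show "min (N T * w_N N S + 1/2 * w_N N (op_add (T \<circ> S) (op_scale \<sigma> (S \<circ> op_adj T))))
             (N S * w_N N T + 1/2 * w_N N (op_add (T \<circ> S) (op_scale \<sigma> (op_adj S \<circ> T))))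
           \<le> 2 * min (N T * w_N N S) (N S * w_N N T)"
      by (rule m1[OF g1 g2])
    show "2 * min (N T * w_N N S) (N S * w_N N T) \<le> 4 * w_N N T * w_N N S"
      using m2[of "N T * w_N N S" "w_N N T * w_N N S" "N S * w_N N T"] k by (simp add: mult.assoc)
  qed
qed

end
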